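(* Let $(V,g)$ be a real vector space of dimension $n\ge3$ with a non-degenerate scalar product $g$ (of arbitrary signature). Let $R\in\mathfrak{r}(V)$ with $R^*\in\mathfrak{r}(V)$. Then: (1) $\pi_8(R)=0=\pi_8(R^* )$; (2) $Ric(R)$ is symmetric if and only if $Ric^*(R)$ is symmetric.
   Context: $\mathfrak{r}(V)$ is the space of $(0,4)$-tensors $R$ with $R(x,y,z,w)=-R(y,x,z,w)$ and $R(x,y,z,w)+R(y,z,x,w)+R(z,x,y,w)=0$. The conjugate of a $(0,4)$-tensor is $R^*(x,y,z,w):=-R(x,y,w,z)$. With $\{e_i\}$ a basis, $g_{ij}=g(e_i,e_j)$ and $(g^{ij})$ the inverse matrix (summation convention), $Ric(R)(x,y):=g^{ij}R(e_i,x,y,e_j)$ and $Ric^*(R):=Ric(R^* )$. For bilinear forms $h,k$: $\Lambda h(x,y)=\tfrac12[h(x,y)-h(y,x)]$; $(h\cdot k)(x,y,z,w)=h(x,y)k(z,w)$; $(h\wedge_r k)(x,y,z,w)=h(x,z)k(y,w)-h(y,z)k(x,w)-r[h(x,w)k(y,z)-h(y,w)k(x,z)]$. Define $4\psi(R)(x,y,z,w)=R(x,y,z,w)+R(y,x,w,z)+R(z,w,x,y)+R(w,z,y,x)$ and $8\mu(R)(x,y,z,w)=3R(x,y,z,w)+3R(x,y,w,z)+R(x,w,z,y)+R(x,z,w,y)+R(w,y,z,x)+R(z,y,w,x)$. For $R\in\mathfrak{r}(V)$ put $\pi_8(R):=R-\psi(R)-\mu(R)+\tfrac{1}{2(n-2)}\Lambda(Ric(R)+Ric^*(R))\cdot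 g+\tfrac{1}{4(n-2)}\Lambda(Ric(R)+Ric^*(R))\wedge_3 g$. *)

theory Defs
  imports "HOL-Analysis.Analysis"
begin

text \<open>Coordinate representation: V = R^n with basis e_i indexed by the finite type 'n
  (n = CARD('n)).  A (0,4)-tensor R is given by its components R(e_i,e_j,e_k,e_l);
  a bilinear form h by its components h(e_i,e_j); the scalar product g by its Gram matrix
  g_ij = g $ i $ j.  All identities in question are multilinear, so they hold for all
  vectors iff they hold on basis vectors.\<close>

type_synonym 'n tensor4 = "'n \<Rightarrow> 'n \<Rightarrow> 'n \<Rightarrow> 'n \<Rightarrow> real"
type_synonym 'n bform = "'n \<Rightarrow> 'n \<Rightarrow> real"

definition in_r :: "'n tensor4 \<Rightarrow> bool" where
  "in_r R \<longleftrightarrow> (\<forall>x y z w. R x y z w = - R y x z w \<and>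
                         R x y z w + R y z x w + R z x y w = 0)"

definition conj4 :: "'n tensor4 \<Rightarrow> 'n tensor4" where
  "conj4 R = (\<lambda>x y z w. - R x y w z)"

definition Ric :: "real^'n^'n \<Rightarrow> ('n::finite) tensor4 \<Rightarrow> 'n bform" where
  "Ric g R = (\<lambda>x y. \<Sum>i\<in>UNIV. \<Sum>j\<in>UNIV. matrix_inv g $ i $ j * R i x y j)"

definition Ric_star :: "real^'n^'n \<Rightarrow> ('n::finite) tensor4 \<Rightarrow> 'n bform" where
  "Ric_star g R = Ric g (conj4 R)"

definition Lam :: "'n bform \<Rightarrow> 'n bform" where
  "Lam h = (\<lambda>x y. (h x y - h y x) / 2)"

definition dotp :: "'n bform \<Rightarrow> 'n bform \<Rightarrow> 'n tensor4" where
  "dotp h k = (\<lambda>x y z w. h x y * k z w)"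

definition wedge :: "real \<Rightarrow> 'n bform \<Rightarrow> 'n bform \<Rightarrow> 'n tensor4" where
  "wedge r h k = (\<lambda>x y z w. h x z * k y w - h y z * k x w - r * (h x w * k y z - h y w * k x z))"

definition psi :: "'n tensor4 \<Rightarrow> 'n tensor4" where
  "psi R = (\<lambda>x y z w. (R x y z w + R y x w z + R z w x y + R w z y x) / 4)"

definition mu :: "'n tensor4 \<Rightarrow> 'n tensor4" where
  "mu R = (\<lambda>x y z w. (3 * R x y z w + 3 * R x y w z + R x w z y + R x z w y
                       + R w y z x + R z y w x) / 8)"

definition gram :: "real^'n^'n \<Rightarrow> 'n bform" where
  "gram g = (\<lambda>i j. g $ i $ j)"

definition pi8 :: "real^'n^'n \<Rightarrow> ('n::finite) tensor4 \<Rightarrow> 'n tensor4" where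
  "pi8 g R = (let n = real CARD('n); A = Lam (\<lambda>x y. Ric g R x y + Ric_star g R x y) in
     (\<lambda>x y z w. R x y z w - psi R x y z w - mu R x y z w
        + 1 / (2 * (n - 2)) * dotp A (gram g) x y z w
        + 1 / (4 * (n - 2)) * wedge 3 A (gram g) x y z w))"

definition sym_bform :: "'n bform \<Rightarrow> bool" where
  "sym_bform h \<longleftrightarrow> (\<forall>x y. h x y = h y x)"

end

theory Submission
  imports Defs
begin

lemma inv_sym:
  fixes g :: "real^'n^'n"
  assumes "transpose g = g" and "invertible g"
  shows "matrix_inv g $ i $ j = matrix_inv g $ j $ i"
proof -
  define B where "B = matrix_inv g"
  have h: "g ** B = mat 1 \<and> B ** g = mat 1"
    using assms(2) unfolding B_def matrix_inv_def invertible_def by (rule someI_ex)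
  have t1: "g ** transpose B = mat 1"
    by (metis assms(1) h matrix_transpose_mul transpose_mat)
  have "B = B ** (g ** transpose B)" using t1 by (simp add: matrix_mul_rid)
  also have "\<dots> = transpose B" using h by (simp add: matrix_mul_assoc matrix_mul_lid)
  finally have "B = transpose B" .
  then show ?thesis unfolding B_def[symmetric]
    by (metis transpose_def vec_lambda_beta)
qed

lemma cons:
  assumes "in_r R" "in_r (conj4 R)"
  shows "\<And>x y z w. R x y z w = - R y x z w"
    "\<And>x y z w. R x y z w + R y z x w + R z x y w = 0"
    "\<And>x y z w. R x y w z + R y z w x + R z x w y = 0"
proof -
  fix x y z w
  show "R x y z w = - R y x z w" using assms(1) unfolding in_r_def by blast
next
  fix x y z w
  show "R x y z w + R y z x w + R z x y w = 0" using assms(1) unfolding in_r_def by blast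
next
  fix x y z w
  have "- R x y w z + - R y z w x + - R z x w y = 0"
    using assms(2) unfolding in_r_def conj4_def by blast
  then show "R x y w z + R y z w x + R z x w y = 0" by linarith
qed

lemma pair_sym:
  assumes "in_r R" "in_r (conj4 R)"
  shows "R i x y j - R i x j y = R j y x i - R j y i x"
proof -
  note a = cons(1)[OF assms] and b = cons(2)[OF assms] and c = cons(3)[OF assms]
  show ?thesis
    using a[of i x y j] c[of i x j y] a[of i y x j] c[of i y x j] a[of i j x y] c[of i j y x]
      b[of i j y x] c[of i j x y] b[of x y j i]
    by linarith
qed

lemma psimu:
  assumes "in_r R" "in_r (conj4 R)"
  shows "R x y z w - psi R x y z w - mu R x y z w = 0"
proof -
  note a = cons(1)[OF assms] and b = cons(2)[OF assms] and c = cons(3)[OF assms]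
  show ?thesis unfolding psi_def mu_def
    using a[of x y z w] c[of x y w z] a[of x y w z] a[of x z y w] c[of x z w y] a[of x z w y]
      b[of x z w y] c[of x z y w] a[of x w y z] c[of x w z y] a[of x w z y] c[of x w y z] b[of y z w x]
    by (simp add: field_simps)
qed


lemma P_sym:
  fixes g :: "real^'n^'n" and R :: "('n::finite) tensor4"
  assumes "transpose g = g" "invertible g" "in_r R" "in_r (conj4 R)"
  shows "Ric g R x y + Ric_star g R x y = Ric g R y x + Ric_star g R y x"
proof -
  let ?G = "matrix_inv g"
  have e: "\<And>x y. Ric g R x y + Ric_star g R x y
      = (\<Sum>i\<in>UNIV. \<Sum>j\<in>UNIV. ?G $ i $ j * (R i x y j - R i x j y))"
    unfolding Ric_star_def Ric_def conj4_def
    by (simp add: sum.distrib[symmetric] algebra_simps)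
  have "(\<Sum>i\<in>UNIV. \<Sum>j\<in>UNIV. ?G $ i $ j * (R i x y j - R i x j y))
      = (\<Sum>i\<in>UNIV. \<Sum>j\<in>UNIV. ?G $ j $ i * (R j y x i - R j y i x))"
    using pair_sym[OF assms(3,4)] inv_sym[OF assms(1,2)] by simp
  also have "\<dots> = (\<Sum>j\<in>UNIV. \<Sum>i\<in>UNIV. ?G $ j $ i * (R j y x i - R j y i x))"
    by (rule sum.swap)
  finally show ?thesis using e by simp
qed

lemma pi8_zero:
  fixes g :: "real^'n^'n" and R :: "('n::finite) tensor4"
  assumes "transpose g = g" "invertible g" "in_r R" "in_r (conj4 R)"
  shows "pi8 g R = (\<lambda>_ _ _ _. 0)"
proof -
  have L: "Lam (\<lambda>x y. Ric g R x y + Ric_star g R x y) = (\<lambda>_ _. 0)"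
    unfolding Lam_def using P_sym[OF assms] by (auto simp: fun_eq_iff)
  show ?thesis unfolding pi8_def Let_def L
    using psimu[OF assms(3,4)] by (simp add: fun_eq_iff dotp_def wedge_def)
qed

theorem lemma4p9:
  fixes g :: "real^'n^'n" and R :: "('n::finite) tensor4"
  assumes "CARD('n) \<ge> 3"
    and "transpose g = g" and "invertible g"
    and "in_r R" and "in_r (conj4 R)"
  shows "pi8 g R = (\<lambda>_ _ _ _. 0) \<and> pi8 g (conj4 R) = (\<lambda>_ _ _ _. 0)
         \<and> (sym_bform (Ric g R) \<longleftrightarrow> sym_bform (Ric_star g R))"
proof (intro conjI)
  have cc: "conj4 (conj4 R) = R" by (simp add: conj4_def)
  show "pi8 g R = (\<lambda>_ _ _ _. 0)" using pi8_zero[OF assms(2-5)] .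
  show "pi8 g (conj4 R) = (\<lambda>_ _ _ _. 0)" using pi8_zero[OF assms(2,3,5)] assms(4) cc by simp
  have P: "\<And>x y. Ric g R x y + Ric_star g R x y = Ric g R y x + Ric_star g R y x"
    using P_sym[OF assms(2-5)] .
  show "sym_bform (Ric g R) \<longleftrightarrow> sym_bform (Ric_star g R)"
    unfolding sym_bform_def
  proof
    assume h: "\<forall>x y. Ric g R x y = Ric g R y x"
    show "\<forall>x y. Ric_star g R x y = Ric_star g R y x"
    proof (intro allI)
      fix x y show "Ric_star g R x y = Ric_star g R y x" using P[of x y] h[rule_format, of x y] by linarith
    qed
  next
    assume h: "\<forall>x y. Ric_star g R x y = Ric_star g R y x"
    show "\<forall>x y. Ric g R x y = Ric g R y x"
    proof (intro allI)
      fix x y show "Ric g R x y = Ric g R y x" using P[of x y] h[rule_format, of x y] by linarith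
    qed
  qed
qed

end
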